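(* Let $G$ be a reducible multigraph. Then the number of degree-$0$ vertices remaining after $G$ has been fully reduced by channel-preserving moves equals $\dim_{\mathbf{Z}/2\mathbf{Z}}\mathcal{C}(G)$; in particular this number does not depend on the sequence of channel-preserving moves used.
   Context: Multigraphs (finite, no self-loops) are allowed; $N(v)$ is the multiset of neighbours of $v$ with multiplicity equal to the number of joining edges. A channel is a vertex set $C$ such that every vertex $v$ has an even number of elements of $N(v)$ (counted with multiplicity) in $C$; $\mathcal{C}(G)$ is the $\mathbf{Z}/2\mathbf{Z}$-vector space of channels under symmetric difference. Channel-preserving moves: (VC) for a vertex $v$ of degree 2 adjacent to distinct $v_1,v_2$, contract both edges at $v$ and delete resulting self-loops; (ED) delete two edges with the same endpoints; (FV) for distinct adjacent $v_1,v_2$ with $\deg v_1=1$, delete $v_1,v_2$ and their incident edges. $G$ is reducible if it can be transformed by a finite sequence of channel-preserving moves into a graph all of whose vertices have degree $0$. *)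

theory Defs
  imports Main HOL.Vector_Spaces "HOL-Library.Z2" "HOL-Library.Function_Algebras"
begin

text \<open>A finite loopless multigraph on vertex type 'a: a vertex set V together with an
edge-multiplicity function m (m u v = number of edges joining u and v).\<close>

type_synonym 'a mgraph = "'a set \<times> ('a \<Rightarrow> 'a \<Rightarrow> nat)"

definition verts :: "'a mgraph \<Rightarrow> 'a set" where "verts G = fst G"
definition mult :: "'a mgraph \<Rightarrow> 'a \<Rightarrow> 'a \<Rightarrow> nat" where "mult G = snd G"

definition wf_mgraph :: "'a mgraph \<Rightarrow> bool" where
  "wf_mgraph G \<longleftrightarrow> finite (verts G)
     \<and> (\<forall>u v. mult G u v = mult G v u)
     \<and> (\<forall>v. mult G v v = 0)
     \<and> (\<forall>u v. mult G u v \<noteq> 0 \<longrightarrow> u \<in> verts G \<and> v \<in> verts G)"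

definition deg :: "'a mgraph \<Rightarrow> 'a \<Rightarrow> nat" where
  "deg G v = (\<Sum>u\<in>verts G. mult G v u)"

definition channels :: "'a mgraph \<Rightarrow> 'a set set" where
  "channels G = {C. C \<subseteq> verts G \<and> (\<forall>v\<in>verts G. even (\<Sum>u\<in>C. mult G v u))}"

text \<open>Z/2Z-vector space structure: a vertex set is identified with its indicator function
'a \<Rightarrow> bit; symmetric difference corresponds to pointwise addition.\<close>
definition ind :: "'a set \<Rightarrow> 'a \<Rightarrow> bit" where
  "ind C = (\<lambda>x. if x \<in> C then 1 else 0)"

definition bscale :: "bit \<Rightarrow> ('a \<Rightarrow> bit) \<Rightarrow> ('a \<Rightarrow> bit)" where
  "bscale c f = (\<lambda>x. c * f x)"

definition channel_dim :: "'a mgraph \<Rightarrow> nat" where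
  "channel_dim G = vector_space.dim bscale (ind ` channels G)"

text \<open>(VC) v of degree 2 adjacent to distinct v1, v2: contract both edges at v; the merged
vertex keeps the name v1; self-loops (former v1-v2 edges) are deleted.\<close>
definition vc_result :: "'a mgraph \<Rightarrow> 'a \<Rightarrow> 'a \<Rightarrow> 'a \<Rightarrow> 'a mgraph" where
  "vc_result G v v1 v2 =
    (verts G - {v, v2},
     (\<lambda>x y. if x \<in> {v, v2} \<or> y \<in> {v, v2} \<or> x = y then 0
            else if x = v1 then mult G v1 y + mult G v2 y
            else if y = v1 then mult G x v1 + mult G x v2
            else mult G x y))"

definition vc_move :: "'a mgraph \<Rightarrow> 'a mgraph \<Rightarrow> bool" where
  "vc_move G H \<longleftrightarrow> (\<exists>v v1 v2. v \<in> verts G \<and> deg G v = 2 \<and> v1 \<noteq> v2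
      \<and> mult G v v1 = 1 \<and> mult G v v2 = 1 \<and> H = vc_result G v v1 v2)"

definition ed_move :: "'a mgraph \<Rightarrow> 'a mgraph \<Rightarrow> bool" where
  "ed_move G H \<longleftrightarrow> (\<exists>a b. a \<noteq> b \<and> mult G a b \<ge> 2
      \<and> H = (verts G, (\<lambda>x y. if (x = a \<and> y = b) \<or> (x = b \<and> y = a)
                              then mult G x y - 2 else mult G x y)))"

definition fv_move :: "'a mgraph \<Rightarrow> 'a mgraph \<Rightarrow> bool" where
  "fv_move G H \<longleftrightarrow> (\<exists>v1 v2. v1 \<in> verts G \<and> v1 \<noteq> v2 \<and> mult G v1 v2 \<ge> 1 \<and> deg G v1 = 1
      \<and> H = (verts G - {v1, v2},
             (\<lambda>x y. if x \<in> {v1, v2} \<or> y \<in> {v1, v2} then 0 else mult G x y)))"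

definition cp_move :: "'a mgraph \<Rightarrow> 'a mgraph \<Rightarrow> bool" where
  "cp_move G H \<longleftrightarrow> vc_move G H \<or> ed_move G H \<or> fv_move G H"

definition fully_reduced :: "'a mgraph \<Rightarrow> bool" where
  "fully_reduced H \<longleftrightarrow> (\<forall>v\<in>verts H. deg H v = 0)"

definition reducible :: "'a mgraph \<Rightarrow> bool" where
  "reducible G \<longleftrightarrow> (\<exists>H. cp_move\<^sup>*\<^sup>* G H \<and> fully_reduced H)"

end

theory Submission
  imports Defs
begin

interpretation Z: vector_space "bscale :: bit \<Rightarrow> ('a \<Rightarrow> bit) \<Rightarrow> ('a \<Rightarrow> bit)"
  by unfold_locales (auto simp: bscale_def fun_eq_iff algebra_simps)

definition restr :: "'a set \<Rightarrow> ('a \<Rightarrow> bit) \<Rightarrow> ('a \<Rightarrow> bit)" where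
  "restr A g = (\<lambda>x. if x \<in> A then 0 else g x)"

lemma restr_hom: "module_hom (bscale :: bit \<Rightarrow> ('a \<Rightarrow> bit) \<Rightarrow> ('a \<Rightarrow> bit)) bscale (restr A)"
  unfolding module_hom_def module_hom_axioms_def
  by (auto simp: restr_def bscale_def fun_eq_iff Z.module_axioms)

lemma dim_restr:
  fixes S :: "('a \<Rightarrow> bit) set"
  assumes S: "Z.subspace S" and ker: "\<And>g. g \<in> S \<Longrightarrow> restr A g = 0 \<Longrightarrow> g = 0"
  shows "Z.dim (restr A ` S) = Z.dim S"
proof -
  interpret h: module_hom "bscale :: bit \<Rightarrow> ('a \<Rightarrow> bit) \<Rightarrow> ('a \<Rightarrow> bit)" bscale "restr A"
    by (rule restr_hom)
  obtain B where B: "B \<subseteq> S" "Z.independent B" "S \<subseteq> Z.span B" "card B = Z.dim S"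
    using Z.basis_exists by blast
  have spB: "Z.span B = S"
    using B S by (metis Z.span_eq_iff Z.span_minimal subset_antisym)
  have inj: "inj_on (restr A) S"
    using h.inj_on_iff_eq_0[OF S] ker by blast
  have ind: "Z.independent (restr A ` B)"
    using h.dependent_inj_imageD B(2) inj spB by metis
  have "Z.span (restr A ` B) = restr A ` S"
    using h.span_image spB by metis
  hence "Z.dim (restr A ` S) = Z.dim (restr A ` B)"
    by (metis Z.dim_span)
  also have "\<dots> = card (restr A ` B)" by (rule Z.dim_eq_card_independent[OF ind])
  also have "\<dots> = card B" using inj B(1) by (meson card_image inj_on_subset)
  finally show ?thesis using B(4) by simp
qed

lemma ind_empty[simp]: "ind {} = 0" by (auto simp: ind_def fun_eq_iff)
lemma ind_eq_0_iff[simp]: "ind C = 0 \<longleftrightarrow> C = {}" by (auto simp: ind_def fun_eq_iff)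
lemma ind_add: "ind C + ind D = ind ((C - D) \<union> (D - C))" by (auto simp: ind_def fun_eq_iff)
lemma ind_scale: "bscale c (ind C) = (if c = 0 then ind {} else ind C)"
  by (cases c) (auto simp: ind_def bscale_def fun_eq_iff)
lemma restr_ind: "restr A (ind C) = ind (C - A)" by (auto simp: ind_def restr_def fun_eq_iff)
lemma ind_inj: "ind C = ind D \<longleftrightarrow> C = D"
  by (auto simp: ind_def fun_eq_iff; metis one_neq_zero)

lemma sum_symdiff:
  assumes "finite C" "finite D"
  shows "sum f ((C - D) \<union> (D - C)) + 2 * sum f (C \<inter> D) = sum f C + (sum f D :: nat)"
proof -
  have a: "sum f C = sum f (C - D) + sum f (C \<inter> D)"
    using assms by (metis add.commute sum.Int_Diff)
  have b: "sum f D = sum f (D - C) + sum f (C \<inter> D)"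
    using assms by (metis add.commute sum.Int_Diff Int_commute)
  have c: "sum f ((C - D) \<union> (D - C)) = sum f (C - D) + sum f (D - C)"
    using assms by (intro sum.union_disjoint) auto
  show ?thesis using a b c by simp
qed

lemma channels_subspace:
  assumes "finite (verts G)"
  shows "Z.subspace (ind ` channels G)"
proof (rule Z.subspaceI)
  show "0 \<in> ind ` channels G"
    by (rule image_eqI[of _ _ "{}"]) (auto simp: channels_def)
next
  fix x y assume "x \<in> ind ` channels G" "y \<in> ind ` channels G"
  then obtain C D where C: "C \<in> channels G" "x = ind C" and D: "D \<in> channels G" "y = ind D" by blast
  have fC: "finite C" "finite D" using C D assms by (auto simp: channels_def intro: finite_subset)
  have "(C - D) \<union> (D - C) \<in> channels G"
    unfolding channels_def
  proof (intro CollectI conjI ballI subsetI)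
    fix u assume "u \<in> C - D \<union> (D - C)" thus "u \<in> verts G" using C D by (auto simp: channels_def)
  next
    fix v assume v: "v \<in> verts G"
    have "even (\<Sum>u\<in>C. mult G v u)" "even (\<Sum>u\<in>D. mult G v u)" using C D v by (auto simp: channels_def)
    thus "even (\<Sum>u\<in>C - D \<union> (D - C). mult G v u)"
      using sum_symdiff[OF fC, of "mult G v"] by (metis even_add even_mult_iff even_numeral)
  qed
  thus "x + y \<in> ind ` channels G" using C D ind_add by auto
next
  fix c x assume "x \<in> ind ` channels G"
  then obtain C where C: "C \<in> channels G" "x = ind C" by blast
  show "bscale c x \<in> ind ` channels G"
    using C by (cases "c = 0") (auto simp: ind_scale channels_def intro!: image_eqI[of _ _ "{}"])
qed

lemma dim_transfer:
  assumes "finite (verts G)"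
    and img: "(\<lambda>C. C - A) ` channels G = channels H"
    and ker: "\<And>C. C \<in> channels G \<Longrightarrow> C \<subseteq> A \<Longrightarrow> C = {}"
  shows "channel_dim H = channel_dim G"
proof -
  have "restr A ` ind ` channels G = ind ` channels H"
  proof -
    have "restr A ` ind ` channels G = ind ` (\<lambda>C. C - A) ` channels G"
      by (simp add: image_image restr_ind)
    thus ?thesis using img by simp
  qed
  moreover have "Z.dim (restr A ` ind ` channels G) = Z.dim (ind ` channels G)"
    by (rule dim_restr[OF channels_subspace[OF assms(1)]])
       (use ker in \<open>force simp: restr_ind\<close>)
  ultimately show ?thesis unfolding channel_dim_def by simp
qed

lemma dim_Pow:
  assumes "finite V"
  shows "Z.dim (ind ` Pow V) = card V"
proof -
  define B where "B = (\<lambda>x. ind {x}) ` V"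
  have sub: "Z.subspace (ind ` Pow W)" for W :: "'a set"
  proof (rule Z.subspaceI)
    show "0 \<in> ind ` Pow W" by (rule image_eqI[of _ _ "{}"]) auto
    show "x + y \<in> ind ` Pow W" if "x \<in> ind ` Pow W" "y \<in> ind ` Pow W" for x y
      using that by (auto simp: ind_add)
    show "bscale c x \<in> ind ` Pow W" if "x \<in> ind ` Pow W" for c x
      using that by (cases "c = 0") (auto simp: ind_scale intro!: image_eqI[of _ _ "{}"])
  qed
  have inS: "ind C \<in> Z.span B" if "C \<subseteq> V" for C
  proof -
    have "finite C" using that assms by (rule finite_subset)
    thus ?thesis using that
    proof (induction C rule: finite_induct)
      case empty thus ?case using Z.span_zero[of B] by (simp add: zero_fun_def)
    next
      case (insert x F)
      have "ind (insert x F) = ind {x} + ind F" using insert by (auto simp: ind_add intro: arg_cong[of _ _ ind])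
      moreover have "ind {x} \<in> Z.span B" using insert by (auto simp: B_def intro: Z.span_base)
      ultimately show ?case using insert Z.span_add by (metis subset_insertI2 insert_subset)
    qed
  qed
  have spB: "Z.span B = ind ` Pow V"
    by (rule Z.span_subspace) (use inS in \<open>auto simp: B_def sub\<close>)
  have indep: "Z.independent B"
  proof
    assume "Z.dependent B"
    then obtain x where x: "x \<in> V" "ind {x} \<in> Z.span (B - {ind {x}})"
      unfolding Z.dependent_def B_def by auto
    have "B - {ind {x}} \<subseteq> ind ` Pow (V - {x})"
      by (auto simp: B_def ind_inj)
    hence "Z.span (B - {ind {x}}) \<subseteq> ind ` Pow (V - {x})"
      by (rule Z.span_minimal[OF _ sub])
    with x have "ind {x} \<in> ind ` Pow (V - {x})" by blast
    then obtain D where "D \<subseteq> V - {x}" "ind {x} = ind D" by blast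
    thus False by (auto simp: ind_inj)
  qed
  have "Z.dim (ind ` Pow V) = card B" using spB indep by (metis Z.dim_span Z.dim_eq_card_independent)
  also have "\<dots> = card V" unfolding B_def by (rule card_image) (auto simp: inj_on_def ind_inj)
  finally show ?thesis .
qed


lemma sum_split2:
  assumes "finite C" "p \<noteq> q"
  shows "sum f C = sum f (C - {p,q}) + (if p \<in> C then f p else 0) + (if q \<in> C then f q else (0::nat))"
proof -
  have "sum f C = sum f (C - {p,q}) + sum f (C \<inter> {p,q})"
    using assms by (metis add.commute sum.Int_Diff)
  moreover have "sum f (C \<inter> {p,q}) = (if p \<in> C then f p else 0) + (if q \<in> C then f q else 0)"
    using assms(2) by (cases "p \<in> C"; cases "q \<in> C") (auto simp: Int_insert_right)
  ultimately show ?thesis by simp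
qed

lemma ev2: "(2::nat) \<le> y \<Longrightarrow> even (s + (y - 2)) = even (s + y)"
proof -
  assume "2 \<le> y" then obtain k where "y = k + 2" by (metis add.commute le_Suc_ex)
  thus ?thesis by simp
qed

lemma wfD:
  assumes "wf_mgraph G"
  shows "finite (verts G)" "mult G u v = mult G v u" "mult G v v = 0"
    "mult G u v \<noteq> 0 \<Longrightarrow> u \<in> verts G" "mult G u v \<noteq> 0 \<Longrightarrow> v \<in> verts G"
  using assms unfolding wf_mgraph_def by blast+

lemma ed_ok:
  assumes wf: "wf_mgraph G" and mv: "ed_move G H"
  shows "wf_mgraph H \<and> channel_dim H = channel_dim G"
proof -
  obtain a b where ab: "a \<noteq> b" "mult G a b \<ge> 2"
    and H: "H = (verts G, (\<lambda>x y. if (x = a \<and> y = b) \<or> (x = b \<and> y = a)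
                              then mult G x y - 2 else mult G x y))"
    using mv unfolding ed_move_def by blast
  have vH: "verts H = verts G" using H by (simp add: verts_def)
  have mH: "mult H x y = (if (x = a \<and> y = b) \<or> (x = b \<and> y = a) then mult G x y - 2 else mult G x y)" for x y
    using H by (simp add: mult_def)
  have ba: "mult G b a \<ge> 2" using ab wfD(2)[OF wf, of b a] by simp
  have abV: "a \<in> verts G" "b \<in> verts G" using wfD(4,5)[OF wf, of a b] ab by auto
  have wfH: "wf_mgraph H"
    unfolding wf_mgraph_def vH mH
  proof (intro conjI allI impI)
    show "finite (verts G)" by (rule wfD(1)[OF wf])
    fix u v
    show "(if u = a \<and> v = b \<or> u = b \<and> v = a then mult G u v - 2 else mult G u v) =
          (if v = a \<and> u = b \<or> v = b \<and> u = a then mult G v u - 2 else mult G v u)"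
    proof -
      have e: "(u = a \<and> v = b \<or> u = b \<and> v = a) = (v = a \<and> u = b \<or> v = b \<and> u = a)" by blast
      show ?thesis by (simp only: e wfD(2)[OF wf, of u v])
    qed
  next
    fix v show "(if v = a \<and> v = b \<or> v = b \<and> v = a then mult G v v - 2 else mult G v v) = 0"
      using wfD(3)[OF wf, of v] by auto
  next
    fix u v assume "(if u = a \<and> v = b \<or> u = b \<and> v = a then mult G u v - 2 else mult G u v) \<noteq> 0"
    hence "mult G u v \<noteq> 0" by (auto split: if_splits)
    thus "u \<in> verts G" using wfD(4)[OF wf, of u v] by simp
  next
    fix u v assume "(if u = a \<and> v = b \<or> u = b \<and> v = a then mult G u v - 2 else mult G u v) \<noteq> 0"
    hence "mult G u v \<noteq> 0" by (auto split: if_splits)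
    thus "v \<in> verts G" using wfD(5)[OF wf, of u v] by simp
  qed
  have ch: "channels H = channels G"
  proof -
    have key: "even (\<Sum>u\<in>C. mult H v u) = even (\<Sum>u\<in>C. mult G v u)" if "C \<subseteq> verts G" for C v
    proof -
      have fC: "finite C" using that wfD(1)[OF wf] finite_subset by blast
      have eq: "(\<Sum>u\<in>C - {a,b}. mult H v u) = (\<Sum>u\<in>C - {a,b}. mult G v u)"
        by (rule sum.cong) (auto simp: mH)
      have ha: "mult H v a = (if v = b then mult G v a - 2 else mult G v a)" using ab(1) by (simp add: mH)
      have hb: "mult H v b = (if v = a then mult G v b - 2 else mult G v b)" using ab(1) by (simp add: mH)
      have sH: "(\<Sum>u\<in>C. mult H v u) = (\<Sum>u\<in>C - {a,b}. mult G v u) + (if a \<in> C then mult H v a else 0) + (if b \<in> C then mult H v b else 0)"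
        using sum_split2[OF fC ab(1), of "mult H v"] eq by simp
      have sG: "(\<Sum>u\<in>C. mult G v u) = (\<Sum>u\<in>C - {a,b}. mult G v u) + (if a \<in> C then mult G v a else 0) + (if b \<in> C then mult G v b else 0)"
        using sum_split2[OF fC ab(1), of "mult G v"] by simp
      show ?thesis
      proof (cases "v = a")
        case True
        have "mult G v a = 0" using True wfD(3)[OF wf] by simp
        thus ?thesis unfolding sH sG ha hb using True ab ev2[of "mult G a b" "\<Sum>u\<in>C - {a,b}. mult G v u"]
          by (cases "b \<in> C") simp_all
      next
        case na: False
        show ?thesis
        proof (cases "v = b")
          case True
          have "mult G v b = 0" using True wfD(3)[OF wf] by simp
          thus ?thesis unfolding sH sG ha hb using True ba ab(1) ev2[of "mult G b a" "\<Sum>u\<in>C - {a,b}. mult G v u"]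
            by (cases "a \<in> C") simp_all
        next
          case False
          thus ?thesis unfolding sH sG ha hb using na by simp
        qed
      qed
    qed
    show ?thesis unfolding channels_def vH
    proof (rule Collect_cong)
      fix C show "(C \<subseteq> verts G \<and> (\<forall>v\<in>verts G. even (\<Sum>u\<in>C. mult H v u))) =
                  (C \<subseteq> verts G \<and> (\<forall>v\<in>verts G. even (\<Sum>u\<in>C. mult G v u)))"
        using key[of C] by blast
    qed
  qed
  have "channel_dim H = channel_dim G"
    by (rule dim_transfer[where A="{}"]) (simp_all add: wfD(1)[OF wf] ch)
  with wfH show ?thesis by simp
qed


lemma fv_ok:
  assumes wf: "wf_mgraph G" and mv: "fv_move G H"
  shows "wf_mgraph H \<and> channel_dim H = channel_dim G"
proof -
  obtain v1 v2 where v1: "v1 \<in> verts G" "v1 \<noteq> v2" "mult G v1 v2 \<ge> 1" "deg G v1 = 1"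
    and H: "H = (verts G - {v1, v2}, (\<lambda>x y. if x \<in> {v1, v2} \<or> y \<in> {v1, v2} then 0 else mult G x y))"
    using mv unfolding fv_move_def by (elim exE conjE) (rule that; assumption)
  define V where "V = verts G"
  have fV: "finite V" using wfD(1)[OF wf] V_def by simp
  have vH: "verts H = V - {v1,v2}" using H V_def by (simp add: verts_def)
  have mH: "mult H x y = (if x \<in> {v1, v2} \<or> y \<in> {v1, v2} then 0 else mult G x y)" for x y
    using H by (simp add: mult_def)
  have v2V: "v2 \<in> V" using wfD(5)[OF wf, of v1 v2] v1(3) V_def by auto
  have sym: "mult G x y = mult G y x" for x y by (rule wfD(2)[OF wf])
  have dg: "mult G v1 v2 + (\<Sum>u\<in>V - {v2}. mult G v1 u) = 1"
    using v1(4) v2V fV unfolding deg_def V_def[symmetric] by (simp add: sum.remove)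
  have m12: "mult G v1 v2 = 1" using dg v1(3) by linarith
  have "(\<Sum>u\<in>V - {v2}. mult G v1 u) = 0" using dg m12 by linarith
  hence z0: "\<forall>u\<in>V - {v2}. mult G v1 u = 0" using fV by simp
  have z1: "mult G v1 u = 0" if "u \<noteq> v2" for u
    using z0 that wfD(5)[OF wf, of v1 u] V_def by auto
  have z2: "mult G x v1 = 0" if "x \<noteq> v2" for x using z1[OF that] sym[of x v1] by simp
  have m21: "mult G v2 v1 = 1" using m12 sym[of v2 v1] by simp
  have wfH: "wf_mgraph H"
    unfolding wf_mgraph_def vH mH
  proof (intro conjI allI impI)
    show "finite (V - {v1, v2})" using fV by simp
    fix u v
    show "(if u \<in> {v1, v2} \<or> v \<in> {v1, v2} then 0 else mult G u v) =
          (if v \<in> {v1, v2} \<or> u \<in> {v1, v2} then 0 else mult G v u)"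
    proof -
      have e: "(u \<in> {v1, v2} \<or> v \<in> {v1, v2}) = (v \<in> {v1, v2} \<or> u \<in> {v1, v2})" by blast
      show ?thesis by (simp only: e sym[of u v])
    qed
  next
    fix v show "(if v \<in> {v1, v2} \<or> v \<in> {v1, v2} then 0 else mult G v v) = 0"
      using wfD(3)[OF wf, of v] by auto
  next
    fix u v assume a: "(if u \<in> {v1, v2} \<or> v \<in> {v1, v2} then 0 else mult G u v) \<noteq> 0"
    hence "mult G u v \<noteq> 0" "u \<notin> {v1,v2}" "v \<notin> {v1,v2}" by (auto split: if_splits)
    thus "u \<in> V - {v1, v2}" using wfD(4)[OF wf, of u v] V_def by simp
  next
    fix u v assume a: "(if u \<in> {v1, v2} \<or> v \<in> {v1, v2} then 0 else mult G u v) \<noteq> 0"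
    hence "mult G u v \<noteq> 0" "u \<notin> {v1,v2}" "v \<notin> {v1,v2}" by (auto split: if_splits)
    thus "v \<in> V - {v1, v2}" using wfD(5)[OF wf, of u v] V_def by simp
  qed
  have split: "(\<Sum>u\<in>C. mult G x u) = (\<Sum>u\<in>C - {v1,v2}. mult G x u)
      + (if v1 \<in> C then mult G x v1 else 0) + (if v2 \<in> C then mult G x v2 else 0)"
    if "finite C" for C x using sum_split2[OF that v1(2)] .
  have eqH: "(\<Sum>u\<in>C - {v1,v2}. mult H x u) = (\<Sum>u\<in>C - {v1,v2}. mult G x u)"
    if "x \<notin> {v1,v2}" for C x
    by (rule sum.cong) (use that in \<open>auto simp: mH\<close>)
  have s1: "(\<Sum>u\<in>C. mult G v1 u) = (if v2 \<in> C then 1 else 0)" if "finite C" for C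
  proof -
    have "(\<Sum>u\<in>C - {v1,v2}. mult G v1 u) = 0" using z1 by (intro sum.neutral) auto
    thus ?thesis using split[OF that, of v1] m12 wfD(3)[OF wf, of v1] by simp
  qed
  have finC: "finite C" if "C \<in> channels G" for C
    using that fV finite_subset unfolding channels_def V_def by blast
  have nv2: "v2 \<notin> C" if "C \<in> channels G" for C
  proof
    assume "v2 \<in> C"
    hence "(\<Sum>u\<in>C. mult G v1 u) = 1" using s1[OF finC[OF that]] by simp
    moreover have "even (\<Sum>u\<in>C. mult G v1 u)" using that v1(1) unfolding channels_def by blast
    ultimately show False by simp
  qed
  have img: "(\<lambda>C. C - {v1,v2}) ` channels G = channels H"
  proof (intro equalityI subsetI)
    fix D assume "D \<in> (\<lambda>C. C - {v1,v2}) ` channels G"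
    then obtain C where C: "C \<in> channels G" "D = C - {v1,v2}" by blast
    have CV: "C \<subseteq> V" using C unfolding channels_def V_def by blast
    show "D \<in> channels H"
      unfolding channels_def vH
    proof (intro CollectI conjI ballI)
      show "D \<subseteq> V - {v1, v2}" using C CV by blast
      fix x assume x: "x \<in> V - {v1,v2}"
      have "even (\<Sum>u\<in>C. mult G x u)" using C x unfolding channels_def V_def by blast
      moreover have "(\<Sum>u\<in>C. mult G x u) = (\<Sum>u\<in>D. mult H x u)"
        using split[OF finC[OF C(1)], of x] eqH[of x C] nv2[OF C(1)] z2[of x] x C(2) by auto
      ultimately show "even (\<Sum>u\<in>D. mult H x u)" by simp
    qed
  next
    fix D assume D: "D \<in> channels H"
    have DV: "D \<subseteq> V - {v1,v2}" using D unfolding channels_def vH by blast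
    have fD: "finite D" using DV fV finite_subset by blast
    define C where "C = (if odd (\<Sum>u\<in>D. mult G v2 u) then insert v1 D else D)"
    have fC: "finite C" using fD C_def by simp
    have CD: "C - {v1,v2} = D" using DV v1(2) C_def by auto
    have CV: "C \<subseteq> V" using DV v1(1) C_def V_def by auto
    have "C \<in> channels G"
      unfolding channels_def V_def[symmetric]
    proof (intro CollectI conjI ballI)
      show "C \<subseteq> V" by (rule CV)
      fix x assume x: "x \<in> V"
      consider "x = v1" | "x = v2" | "x \<notin> {v1,v2}" by blast
      thus "even (\<Sum>u\<in>C. mult G x u)"
      proof cases
        case 1 thus ?thesis using s1[OF fC] CV DV v1(2) C_def by auto
      next
        case 2
        have "v2 \<notin> C" using DV v1(2) C_def by auto
        hence "(\<Sum>u\<in>C. mult G v2 u) = (\<Sum>u\<in>D. mult G v2 u) + (if v1 \<in> C then 1 else 0)"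
          using split[OF fC, of v2] CD m21 by simp
        moreover have "(v1 \<in> C) = odd (\<Sum>u\<in>D. mult G v2 u)" using DV C_def by auto
        ultimately show ?thesis using 2 by simp
      next
        case 3
        have "v2 \<notin> C" using DV v1(2) C_def by auto
        hence "(\<Sum>u\<in>C. mult G x u) = (\<Sum>u\<in>D. mult H x u)"
          using split[OF fC, of x] CD z2[of x] eqH[of x C] 3 by auto
        moreover have "even (\<Sum>u\<in>D. mult H x u)" using D x 3 unfolding channels_def vH by blast
        ultimately show ?thesis by simp
      qed
    qed
    thus "D \<in> (\<lambda>C. C - {v1,v2}) ` channels G" using CD by blast
  qed
  have ker: "C = {}" if "C \<in> channels G" "C \<subseteq> {v1,v2}" for C
  proof -
    have n2: "v2 \<notin> C" by (rule nv2[OF that(1)])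
    have fC: "finite C" by (rule finC[OF that(1)])
    have em: "C - {v1,v2} = {}" using that(2) by blast
    have s: "(\<Sum>u\<in>C. mult G v2 u) = (if v1 \<in> C then 1 else 0)"
      using split[OF fC, of v2] n2 m21 unfolding em by simp
    have ev: "even (\<Sum>u\<in>C. mult G v2 u)" using that(1) v2V unfolding channels_def V_def by blast
    have n1: "v1 \<notin> C"
    proof
      assume "v1 \<in> C"
      hence "(\<Sum>u\<in>C. mult G v2 u) = 1" using s by simp
      thus False using ev by simp
    qed
    show ?thesis using n1 n2 that(2) by auto
  qed
  have "channel_dim H = channel_dim G"
    by (rule dim_transfer[OF wfD(1)[OF wf] img ker])
  with wfH show ?thesis by simp
qed


lemma par1:
  fixes a b h c d :: nat
  assumes "even (a + c + d)" "even (b + c)" "h + d = a + b" shows "even h"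
  using assms by presburger

lemma par2:
  fixes a b h d :: nat
  assumes "even h" "h + d = a + b" shows "even (b + (if odd (a + d) then 1 else 0))"
  using assms by (cases "odd (a + d)") (simp_all, presburger+)

lemma par3: "even ((x::nat) + (if odd x then 1 else 0))"
  by (cases "odd x") simp_all

lemma vc_ok:
  assumes wf: "wf_mgraph G" and mv: "vc_move G H"
  shows "wf_mgraph H \<and> channel_dim H = channel_dim G"
proof -
  obtain v v1 v2 where vv: "v \<in> verts G" "deg G v = 2" "v1 \<noteq> v2" "mult G v v1 = 1" "mult G v v2 = 1"
    and H: "H = vc_result G v v1 v2"
    using mv unfolding vc_move_def by (elim exE conjE) (rule that; assumption)
  define V where "V = verts G"
  have fV: "finite V" using wfD(1)[OF wf] V_def by simp
  have vH: "verts H = V - {v,v2}" using H V_def by (simp add: verts_def vc_result_def)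
  have mH: "mult H x y = (if x \<in> {v, v2} \<or> y \<in> {v, v2} \<or> x = y then 0
            else if x = v1 then mult G v1 y + mult G v2 y
            else if y = v1 then mult G x v1 + mult G x v2
            else mult G x y)" for x y
    using H by (simp add: mult_def vc_result_def)
  have sym: "mult G x y = mult G y x" for x y by (rule wfD(2)[OF wf])
  have d0: "mult G x x = 0" for x by (rule wfD(3)[OF wf])
  have vv1: "v \<noteq> v1" using vv(4) d0[of v] by auto
  have vv2: "v \<noteq> v2" using vv(5) d0[of v] by auto
  have v1V: "v1 \<in> V" using wfD(5)[OF wf, of v v1] vv(4) V_def by simp
  have v2V: "v2 \<in> V" using wfD(5)[OF wf, of v v2] vv(5) V_def by simp
  have dg: "(\<Sum>u\<in>V - {v1,v2}. mult G v u) + 1 + 1 = 2"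
    using sum_split2[OF fV vv(3), of "mult G v"] vv(2,4,5) v1V v2V unfolding deg_def V_def[symmetric] by simp
  hence "(\<Sum>u\<in>V - {v1,v2}. mult G v u) = 0" by simp
  hence z0: "\<forall>u\<in>V - {v1,v2}. mult G v u = 0" using fV by simp
  have zv: "mult G v u = 0" if "u \<notin> {v1,v2}" for u
    using z0 that wfD(5)[OF wf, of v u] V_def by auto
  have zv': "mult G x v = 0" if "x \<notin> {v1,v2}" for x using zv[OF that] sym[of x v] by simp
  have m1v: "mult G v1 v = 1" using vv(4) sym[of v1 v] by simp
  have m2v: "mult G v2 v = 1" using vv(5) sym[of v2 v] by simp
  define k where "k = mult G v1 v2"
  have k2: "mult G v2 v1 = k" using k_def sym[of v2 v1] by simp
  have wfH: "wf_mgraph H"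
    unfolding wf_mgraph_def vH
  proof (intro conjI)
    show "finite (V - {v, v2})" using fV by simp
    show "\<forall>x y. mult H x y = mult H y x"
    proof (intro allI)
      fix x y
      consider (z) "x \<in> {v, v2} \<or> y \<in> {v, v2} \<or> x = y"
        | (a) "\<not> (x \<in> {v, v2} \<or> y \<in> {v, v2} \<or> x = y)" "x = v1"
        | (b) "\<not> (x \<in> {v, v2} \<or> y \<in> {v, v2} \<or> x = y)" "x \<noteq> v1" "y = v1"
        | (c) "\<not> (x \<in> {v, v2} \<or> y \<in> {v, v2} \<or> x = y)" "x \<noteq> v1" "y \<noteq> v1" by blast
      thus "mult H x y = mult H y x"
      proof cases
        case z
        hence "mult H x y = 0" "mult H y x = 0" by (simp_all only: mH) auto
        thus ?thesis by simp
      next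
        case a
        hence "mult H x y = mult G v1 y + mult G v2 y" "mult H y x = mult G y v1 + mult G y v2"
          by (simp_all only: mH) auto
        thus ?thesis using sym[of v1 y] sym[of v2 y] by simp
      next
        case b
        hence "mult H x y = mult G x v1 + mult G x v2" "mult H y x = mult G v1 x + mult G v2 x"
          by (simp_all only: mH) auto
        thus ?thesis using sym[of v1 x] sym[of v2 x] by simp
      next
        case c
        hence "mult H x y = mult G x y" "mult H y x = mult G y x"
          by (simp_all only: mH) auto
        thus ?thesis using sym[of x y] by simp
      qed
    qed
    show "\<forall>x. mult H x x = 0" by (simp add: mH)
    show "\<forall>x y. mult H x y \<noteq> 0 \<longrightarrow> x \<in> V - {v, v2} \<and> y \<in> V - {v, v2}"
    proof (intro allI impI)
      fix x y assume nz: "mult H x y \<noteq> 0"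
      hence ne: "x \<notin> {v,v2}" "y \<notin> {v,v2}" "x \<noteq> y" by (auto simp: mH)
      have "x \<in> V"
      proof (cases "x = v1")
        case True thus ?thesis using v1V by simp
      next
        case False
        hence "mult G x y \<noteq> 0 \<or> mult G x v1 \<noteq> 0 \<or> mult G x v2 \<noteq> 0" using nz ne
          by (auto simp: mH split: if_splits)
        thus ?thesis using wfD(4)[OF wf, of x y] wfD(4)[OF wf, of x v1] wfD(4)[OF wf, of x v2] V_def by auto
      qed
      moreover have "y \<in> V"
      proof (cases "y = v1")
        case True thus ?thesis using v1V by simp
      next
        case False
        hence "mult G x y \<noteq> 0 \<or> mult G v1 y \<noteq> 0 \<or> mult G v2 y \<noteq> 0" using nz ne
          by (auto simp: mH split: if_splits)
        thus ?thesis using wfD(5)[OF wf, of x y] wfD(5)[OF wf, of v1 y] wfD(5)[OF wf, of v2 y] V_def by auto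
      qed
      ultimately show "x \<in> V - {v, v2} \<and> y \<in> V - {v, v2}" using ne by simp
    qed
  qed
  have sp: "(\<Sum>u\<in>C. mult G x u) = (\<Sum>u\<in>C - {v,v2}. mult G x u)
      + (if v \<in> C then mult G x v else 0) + (if v2 \<in> C then mult G x v2 else 0)"
    if "finite C" for C x using sum_split2[OF that vv2] .
  have sv: "(\<Sum>u\<in>C. mult G v u) = (if v1 \<in> C then 1 else 0) + (if v2 \<in> C then 1 else 0)"
    if "finite C" for C
  proof -
    have "(\<Sum>u\<in>C - {v1,v2}. mult G v u) = 0" using zv by (intro sum.neutral) auto
    thus ?thesis using sum_split2[OF that vv(3), of "mult G v"] vv(4,5) by simp
  qed
  have hy: "(\<Sum>u\<in>D. mult H y u) = (\<Sum>u\<in>D. mult G y u) + (if v1 \<in> D then mult G y v2 else 0)"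
    if "finite D" "D \<subseteq> V - {v,v2}" "y \<notin> {v,v2}" "y \<noteq> v1" for D y
  proof -
    have "(\<Sum>u\<in>D. mult H y u) = (\<Sum>u\<in>D. mult G y u + (if u = v1 then mult G y v2 else 0))"
    proof (rule sum.cong)
      fix u assume u: "u \<in> D"
      hence uu: "u \<notin> {v,v2}" using that(2) by auto
      show "mult H y u = mult G y u + (if u = v1 then mult G y v2 else 0)"
      proof (cases "u = y")
        case True thus ?thesis using that(4) d0[of y] by (simp add: mH)
      next
        case False thus ?thesis using uu that(3,4) by (simp add: mH)
      qed
    qed simp
    also have "\<dots> = (\<Sum>u\<in>D. mult G y u) + (\<Sum>u\<in>D. (if u = v1 then mult G y v2 else 0))"
      by (rule sum.distrib)
    also have "(\<Sum>u\<in>D. (if u = v1 then mult G y v2 else 0)) = (if v1 \<in> D then mult G y v2 else 0)"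
      using that(1) by (simp add: sum.delta')
    finally show ?thesis .
  qed
  have h1: "(\<Sum>u\<in>D. mult H v1 u) + (if v1 \<in> D then k else 0) = (\<Sum>u\<in>D. mult G v1 u) + (\<Sum>u\<in>D. mult G v2 u)"
    if "finite D" "D \<subseteq> V - {v,v2}" for D
  proof -
    have "(\<Sum>u\<in>D. mult G v1 u) + (\<Sum>u\<in>D. mult G v2 u) = (\<Sum>u\<in>D. mult G v1 u + mult G v2 u)"
      by (rule sum.distrib[symmetric])
    also have "\<dots> = (\<Sum>u\<in>D. mult H v1 u + (if u = v1 then k else 0))"
    proof (rule sum.cong)
      fix u assume u: "u \<in> D"
      hence uu: "u \<notin> {v,v2}" using that(2) by auto
      show "mult G v1 u + mult G v2 u = mult H v1 u + (if u = v1 then k else 0)"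
      proof (cases "u = v1")
        case True thus ?thesis using d0[of v1] k2 by (simp add: mH)
      next
        case False thus ?thesis using uu vv1[symmetric] vv(3)[symmetric] by (simp add: mH)
      qed
    qed simp
    also have "\<dots> = (\<Sum>u\<in>D. mult H v1 u) + (\<Sum>u\<in>D. (if u = v1 then k else 0))"
      by (rule sum.distrib)
    also have "(\<Sum>u\<in>D. (if u = v1 then k else 0)) = (if v1 \<in> D then k else 0)"
      using that(1) by (simp add: sum.delta')
    finally show ?thesis by simp
  qed
  have finC: "finite C" if "C \<in> channels G" for C
    using that fV finite_subset unfolding channels_def V_def by blast
  have evC: "even (\<Sum>u\<in>C. mult G x u)" if "C \<in> channels G" "x \<in> V" for C x
    using that unfolding channels_def V_def by blast
  have eqv: "(v1 \<in> C) = (v2 \<in> C)" if "C \<in> channels G" for C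
    using evC[OF that vv(1)[folded V_def]] sv[OF finC[OF that]] by (auto split: if_splits)
  have img: "(\<lambda>C. C - {v,v2}) ` channels G = channels H"
  proof (intro equalityI subsetI)
    fix D assume "D \<in> (\<lambda>C. C - {v,v2}) ` channels G"
    then obtain C where C: "C \<in> channels G" "D = C - {v,v2}" by blast
    have CV: "C \<subseteq> V" using C unfolding channels_def V_def by blast
    have fC: "finite C" by (rule finC[OF C(1)])
    have fD: "finite D" using fC C(2) by simp
    have DV: "D \<subseteq> V - {v,v2}" using CV C(2) by blast
    have v1D: "(v1 \<in> D) = (v2 \<in> C)" using eqv[OF C(1)] C(2) vv1[symmetric] vv(3) by auto
    show "D \<in> channels H"
      unfolding channels_def vH
    proof (intro CollectI conjI ballI)
      show "D \<subseteq> V - {v, v2}" by (rule DV)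
      fix y assume y: "y \<in> V - {v,v2}"
      show "even (\<Sum>u\<in>D. mult H y u)"
      proof (cases "y = v1")
        case True
        have e1: "even (\<Sum>u\<in>C. mult G v1 u)" using evC[OF C(1) v1V] .
        have e2: "even (\<Sum>u\<in>C. mult G v2 u)" using evC[OF C(1) v2V] .
        have s1: "(\<Sum>u\<in>C. mult G v1 u) = (\<Sum>u\<in>D. mult G v1 u) + (if v \<in> C then 1 else 0) + (if v2 \<in> C then k else 0)"
          using sp[OF fC, of v1] C(2) m1v k_def by simp
        have s2: "(\<Sum>u\<in>C. mult G v2 u) = (\<Sum>u\<in>D. mult G v2 u) + (if v \<in> C then 1 else 0)"
          using sp[OF fC, of v2] C(2) m2v d0[of v2] by simp
        have s3: "(\<Sum>u\<in>D. mult H v1 u) + (if v1 \<in> D then k else 0) = (\<Sum>u\<in>D. mult G v1 u) + (\<Sum>u\<in>D. mult G v2 u)"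
          by (rule h1[OF fD DV])
        have dd: "(if v2 \<in> C then k else 0) = (if v1 \<in> D then k else 0)" using v1D by simp
        have A: "even ((\<Sum>u\<in>D. mult G v1 u) + (if v \<in> C then 1 else 0) + (if v1 \<in> D then k else 0))"
          using e1 unfolding s1 dd .
        have B: "even ((\<Sum>u\<in>D. mult G v2 u) + (if v \<in> C then 1 else 0))"
          using e2 unfolding s2 .
        show ?thesis unfolding True by (rule par1[OF A B s3])
      next
        case False
        have yy: "y \<notin> {v1,v2}" "y \<notin> {v,v2}" using y False by auto
        have "(\<Sum>u\<in>C. mult G y u) = (\<Sum>u\<in>D. mult G y u) + (if v2 \<in> C then mult G y v2 else 0)"
          using sp[OF fC, of y] C(2) zv'[OF yy(1)] by simp
        moreover have "(\<Sum>u\<in>D. mult H y u) = (\<Sum>u\<in>D. mult G y u) + (if v1 \<in> D then mult G y v2 else 0)"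
          by (rule hy[OF fD DV yy(2) False])
        moreover have "even (\<Sum>u\<in>C. mult G y u)" using evC[OF C(1)] y by blast
        ultimately show ?thesis using v1D by simp
      qed
    qed
  next
    fix D assume D: "D \<in> channels H"
    have DV: "D \<subseteq> V - {v,v2}" using D unfolding channels_def vH by blast
    have fD: "finite D" using DV fV finite_subset by blast
    have evD: "even (\<Sum>u\<in>D. mult H y u)" if "y \<in> V - {v,v2}" for y
      using D that unfolding channels_def vH by blast
    define C0 where "C0 = (if v1 \<in> D then insert v2 D else D)"
    define C where "C = (if odd (\<Sum>u\<in>C0. mult G v1 u) then insert v C0 else C0)"
    have fC0: "finite C0" using fD C0_def by simp
    have fC: "finite C" using fC0 C_def by simp
    have CD: "C - {v,v2} = D" using DV vv2 C_def C0_def by auto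
    have CV: "C \<subseteq> V" using DV vv(1) v2V C_def C0_def V_def by auto
    have v2C: "(v2 \<in> C) = (v1 \<in> D)" using DV vv2 C_def C0_def by auto
    have v1C: "(v1 \<in> C) = (v1 \<in> D)" using DV vv1 vv(3) C_def C0_def by auto
    have vC: "(v \<in> C) = odd (\<Sum>u\<in>C0. mult G v1 u)" using DV vv1 vv2 C_def C0_def by auto
    have c0: "(\<Sum>u\<in>C0. mult G v1 u) = (\<Sum>u\<in>D. mult G v1 u) + (if v1 \<in> D then k else 0)"
    proof (cases "v1 \<in> D")
      case True
      have "v2 \<notin> D" using DV by auto
      thus ?thesis using True fD C0_def k_def by simp
    next
      case False thus ?thesis using C0_def by simp
    qed
    have "C \<in> channels G"
      unfolding channels_def V_def[symmetric]
    proof (intro CollectI conjI ballI)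
      show "C \<subseteq> V" by (rule CV)
      fix y assume y: "y \<in> V"
      consider "y = v" | "y = v1" | "y = v2" | "y \<notin> {v,v1,v2}" by blast
      thus "even (\<Sum>u\<in>C. mult G y u)"
      proof cases
        case 1 thus ?thesis using sv[OF fC] v1C v2C by simp
      next
        case 2
        have "(\<Sum>u\<in>C. mult G v1 u) = (\<Sum>u\<in>D. mult G v1 u) + (if v \<in> C then 1 else 0) + (if v2 \<in> C then k else 0)"
          using sp[OF fC, of v1] CD m1v k_def by simp
        also have "\<dots> = (\<Sum>u\<in>C0. mult G v1 u) + (if odd (\<Sum>u\<in>C0. mult G v1 u) then 1 else 0)"
          using c0 vC v2C by simp
        finally show ?thesis unfolding 2 using par3 by simp
      next
        case 3
        have a: "(\<Sum>u\<in>C. mult G v2 u) = (\<Sum>u\<in>D. mult G v2 u) + (if v \<in> C then 1 else 0)"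
          using sp[OF fC, of v2] CD m2v d0[of v2] by simp
        have b: "(\<Sum>u\<in>D. mult H v1 u) + (if v1 \<in> D then k else 0) = (\<Sum>u\<in>D. mult G v1 u) + (\<Sum>u\<in>D. mult G v2 u)"
          by (rule h1[OF fD DV])
        have e: "even (\<Sum>u\<in>D. mult H v1 u)" using evD v1V vv1 vv(3) by simp
        have "(if v \<in> C then 1 else 0) = (if odd ((\<Sum>u\<in>D. mult G v1 u) + (if v1 \<in> D then k else 0)) then (1::nat) else 0)"
          using vC c0 by simp
        thus ?thesis unfolding 3 a using par2[OF e b] by simp
      next
        case 4
        have yy: "y \<notin> {v1,v2}" "y \<notin> {v,v2}" "y \<noteq> v1" using 4 by auto
        have "(\<Sum>u\<in>C. mult G y u) = (\<Sum>u\<in>D. mult G y u) + (if v2 \<in> C then mult G y v2 else 0)"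
          using sp[OF fC, of y] CD zv'[OF yy(1)] by simp
        moreover have "(\<Sum>u\<in>D. mult H y u) = (\<Sum>u\<in>D. mult G y u) + (if v1 \<in> D then mult G y v2 else 0)"
          by (rule hy[OF fD DV yy(2,3)])
        moreover have "even (\<Sum>u\<in>D. mult H y u)" using evD y yy by simp
        ultimately show ?thesis using v2C by simp
      qed
    qed
    thus "D \<in> (\<lambda>C. C - {v,v2}) ` channels G" using CD by blast
  qed
  have ker: "C = {}" if "C \<in> channels G" "C \<subseteq> {v,v2}" for C
  proof -
    have fC: "finite C" by (rule finC[OF that(1)])
    have "v1 \<notin> C" using that(2) vv1 vv(3) by auto
    hence n2: "v2 \<notin> C" using eqv[OF that(1)] by simp
    have em: "C - {v,v2} = {}" using that(2) by blast
    have s: "(\<Sum>u\<in>C. mult G v1 u) = (if v \<in> C then 1 else 0)"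
      using sp[OF fC, of v1] n2 m1v unfolding em by simp
    have ev: "even (\<Sum>u\<in>C. mult G v1 u)" using evC[OF that(1) v1V] .
    have n1: "v \<notin> C"
    proof
      assume "v \<in> C"
      hence "(\<Sum>u\<in>C. mult G v1 u) = 1" using s by simp
      thus False using ev by simp
    qed
    show ?thesis using n1 n2 that(2) by auto
  qed
  have "channel_dim H = channel_dim G"
    by (rule dim_transfer[OF wfD(1)[OF wf] img ker])
  with wfH show ?thesis by simp
qed


lemma final_dim:
  assumes wf: "wf_mgraph H" and fr: "fully_reduced H"
  shows "channel_dim H = card (verts H)"
proof -
  have fV: "finite (verts H)" by (rule wfD(1)[OF wf])
  have z: "mult H v u = 0" if "v \<in> verts H" "u \<in> verts H" for u v
  proof -
    have "(\<Sum>u\<in>verts H. mult H v u) = 0" using fr that(1) unfolding fully_reduced_def deg_def by blast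
    thus ?thesis using fV that(2) by simp
  qed
  have "channels H = Pow (verts H)"
  proof (intro equalityI subsetI)
    fix C assume "C \<in> channels H" thus "C \<in> Pow (verts H)" unfolding channels_def by blast
  next
    fix C assume C: "C \<in> Pow (verts H)"
    have "(\<Sum>u\<in>C. mult H v u) = 0" if "v \<in> verts H" for v
      using C z[OF that] by (intro sum.neutral) blast
    thus "C \<in> channels H" using C unfolding channels_def by simp
  qed
  thus ?thesis unfolding channel_dim_def using dim_Pow[OF fV] by simp
qed


lemma step_ok:
  assumes "wf_mgraph G" "cp_move G H"
  shows "wf_mgraph H \<and> channel_dim H = channel_dim G"
  using assms ed_ok fv_ok vc_ok unfolding cp_move_def by blast

lemma star_ok:
  assumes "cp_move\<^sup>*\<^sup>* G H" "wf_mgraph G"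
  shows "wf_mgraph H \<and> channel_dim H = channel_dim G"
  using assms
proof (induction rule: rtranclp_induct)
  case base thus ?case by simp
next
  case (step y z)
  hence "wf_mgraph y" "channel_dim y = channel_dim G" by auto
  thus ?case using step_ok[of y z] step(2) by simp
qed

theorem theorem6p3:
  fixes G H :: "'a mgraph"
  assumes "wf_mgraph G"
    and "reducible G"
    and "cp_move\<^sup>*\<^sup>* G H"
    and "fully_reduced H"
  shows "card (verts H) = channel_dim G"
proof -
  have "wf_mgraph H \<and> channel_dim H = channel_dim G" using star_ok[OF assms(3,1)] .
  thus ?thesis using final_dim[OF _ assms(4)] by simp
qed

end
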